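(* Let $\chi\in M_{\mathbb{R}}$ with $r(\chi)=r$, and let $\lambda$ be a cocharacter of $SG(d)$ with $\chi\in F_r(\lambda)$. Then there exist $c\in\mathbb{R}$ and coefficients $c_\beta$ for $\beta\in\mathcal{W}$ with \[c_\beta=0 \text{ if } \langle\lambda,\beta\rangle<0,\qquad c_\beta=-r \text{ if } \langle\lambda,\beta\rangle>0,\qquad c_\beta\in[-r,0]\text{ if }\langle\lambda,\beta\rangle=0,\] such that $\chi=\sum_{\beta\in\mathcal{W}}c_\beta\beta+c\tau_d$. Conversely, every $\chi\in r\mathbb{W}$ of this form lies on $F_r(\lambda)$. Consequently, if $\mu$ is a cocharacter of $SG(d)$ with $F_r(\mu)\subset F_r(\lambda)$, then $\mu\ge\lambda$. Moreover, if $\chi\in F_r(\lambda)^{\mathrm{int}}$, then the coefficients $c_\beta$ with $\langle\lambda,\beta\rangle=0$ can be chosen in $(-r,0]$.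
   Context: Let $Q=(I,E)$ be a symmetric quiver (for all $i,j\in I$ the number of arrows $i\to j$ equals the number of arrows $j\to i$), with source and target maps $s,t$. Fix $d\in\mathbb{N}^I$ and let $R(d)=\bigoplus_{a\in E}\mathrm{Hom}(\mathbb{C}^{d_{s(a)}},\mathbb{C}^{d_{t(a)}})$ with $G(d)=\prod_i GL(d_i)$ acting by conjugation. Standing assumption: the subquiver of $Q$ on the vertices $i$ with $d_i\neq0$ is connected and is not the quiver with one vertex and no arrows. Let $M=\bigoplus_{i\in I,1\le j\le d_i}\mathbb{Z}\beta^i_j$ be the weight lattice of the diagonal torus $T(d)$, $M_{\mathbb{R}}=M\otimes\mathbb{R}$, $N$ the dual (coweight) lattice, $\langle\,,\rangle$ the pairing. Let $\mathcal{W}$ be the multiset of $T(d)$-weights of $R(d)$ (for each arrow $a:i\to j$ and $x\le d_i$, $y\le d_j$, the weight $\beta^j_y-\beta^i_x$). Let $\tau_d=(\sum_{i,j}\beta^i_j)/(\sum_i d_i)$ and $\mathbb{W}=\sum_{\beta\in\mathcal{W}}[0,\beta]+\mathbb{R}\tau_d\subset M_{\mathbb{R}}$ (Minkowski sum). For $\chi\in M_{\mathbb{R}}$, $r(\chi)$ is the smallest $r\ge0$ with $\chi\in r\mathbb{W}$. A cocharacter of $SG(d)$ (the kernel of the product of determinants) means here an element $\lambda\in N$ with $\langle\lambda,\sum_{i,j}\beta^i_j\rangle=0$. Set $N^{\lambda>0}:=\sum_{\beta\in\mathcal{W},\,\langle\lambda,\beta\rangle>0}\beta$. For $r\ge0$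 let $H_r(\lambda)=\{\psi\in M_{\mathbb{R}}:\langle\lambda,\psi\rangle+r\langle\lambda,N^{\lambda>0}\rangle=0\}$ and $F_r(\lambda)=H_r(\lambda)\cap r\mathbb{W}$. Write $\mu\ge\lambda$ if every $\beta\in\mathcal{W}$ with $\langle\lambda,\beta\rangle>0$ satisfies $\langle\mu,\beta\rangle>0$, and $\mu>\lambda$ if $\mu\ge\lambda$ but not $\lambda\ge\mu$. Let $F_r(\lambda)^{\mathrm{int}}:=F_r(\lambda)\setminus\bigcup_{\mu>\lambda}F_r(\mu)$. *)

theory Defs
  imports Complex_Main
begin

text \<open>Quiver data: vertex set I, arrow set E, source/target maps s t, dimension vector d.
  Coordinates of M_R: index set B = {(i,j). i in I, 1 <= j <= d i}; a vector of M_R is a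
  function ('v * nat) => real vanishing outside B.\<close>

definition symmetric_quiver :: "'v set \<Rightarrow> 'e set \<Rightarrow> ('e \<Rightarrow> 'v) \<Rightarrow> ('e \<Rightarrow> 'v) \<Rightarrow> bool" where
  "symmetric_quiver I E s t \<longleftrightarrow>
     (\<forall>i\<in>I. \<forall>j\<in>I. card {a\<in>E. s a = i \<and> t a = j} = card {a\<in>E. s a = j \<and> t a = i})"

definition supp_dim :: "'v set \<Rightarrow> ('v \<Rightarrow> nat) \<Rightarrow> 'v set" where
  "supp_dim I d = {i\<in>I. d i \<noteq> 0}"

definition standing_assumption ::
  "'v set \<Rightarrow> 'e set \<Rightarrow> ('e \<Rightarrow> 'v) \<Rightarrow> ('e \<Rightarrow> 'v) \<Rightarrow> ('v \<Rightarrow> nat) \<Rightarrow> bool" where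
  "standing_assumption I E s t d \<longleftrightarrow>
     (let S = supp_dim I d;
          ES = {a\<in>E. s a \<in> S \<and> t a \<in> S};
          R = {(s a, t a) | a. a \<in> ES} \<union> {(t a, s a) | a. a \<in> ES}
      in S \<noteq> {} \<and> (\<forall>i\<in>S. \<forall>j\<in>S. (i, j) \<in> R\<^sup>*) \<and> \<not> (card S = 1 \<and> ES = {}))"

definition Bidx :: "'v set \<Rightarrow> ('v \<Rightarrow> nat) \<Rightarrow> ('v \<times> nat) set" where
  "Bidx I d = {(i, j). i \<in> I \<and> 1 \<le> j \<and> j \<le> d i}"

definition MR :: "'v set \<Rightarrow> ('v \<Rightarrow> nat) \<Rightarrow> (('v \<times> nat) \<Rightarrow> real) set" where
  "MR I d = {\<chi>. \<forall>b. b \<notin> Bidx I d \<longrightarrow> \<chi> b = 0}"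

definition pairing :: "'v set \<Rightarrow> ('v \<Rightarrow> nat) \<Rightarrow> (('v \<times> nat) \<Rightarrow> int) \<Rightarrow> (('v \<times> nat) \<Rightarrow> real) \<Rightarrow> real" where
  "pairing I d lam \<psi> = (\<Sum>b\<in>Bidx I d. real_of_int (lam b) * \<psi> b)"

text \<open>Cocharacters of SG(d): coweights supported on B with sum of coordinates 0.\<close>
definition cochar :: "'v set \<Rightarrow> ('v \<Rightarrow> nat) \<Rightarrow> (('v \<times> nat) \<Rightarrow> int) \<Rightarrow> bool" where
  "cochar I d lam \<longleftrightarrow> (\<forall>b. b \<notin> Bidx I d \<longrightarrow> lam b = 0) \<and> (\<Sum>b\<in>Bidx I d. lam b) = 0"

text \<open>Index set of the multiset of weights: triples (a, x, y).\<close>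
definition Widx :: "'e set \<Rightarrow> ('e \<Rightarrow> 'v) \<Rightarrow> ('e \<Rightarrow> 'v) \<Rightarrow> ('v \<Rightarrow> nat) \<Rightarrow> ('e \<times> nat \<times> nat) set" where
  "Widx E s t d = {(a, x, y). a \<in> E \<and> 1 \<le> x \<and> x \<le> d (s a) \<and> 1 \<le> y \<and> y \<le> d (t a)}"

definition wt :: "('e \<Rightarrow> 'v) \<Rightarrow> ('e \<Rightarrow> 'v) \<Rightarrow> ('e \<times> nat \<times> nat) \<Rightarrow> ('v \<times> nat) \<Rightarrow> real" where
  "wt s t w = (case w of (a, x, y) \<Rightarrow>
      (\<lambda>b. (if b = (t a, y) then 1 else 0) - (if b = (s a, x) then 1 else 0)))"

definition tau :: "'v set \<Rightarrow> ('v \<Rightarrow> nat) \<Rightarrow> ('v \<times> nat) \<Rightarrow> real" where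
  "tau I d = (\<lambda>b. if b \<in> Bidx I d then 1 / real (card (Bidx I d)) else 0)"

text \<open>r W = sum over weights of [0, r beta] + R tau (for r > 0 this is the dilate of W).\<close>
definition rW :: "'v set \<Rightarrow> 'e set \<Rightarrow> ('e \<Rightarrow> 'v) \<Rightarrow> ('e \<Rightarrow> 'v) \<Rightarrow> ('v \<Rightarrow> nat) \<Rightarrow> real
     \<Rightarrow> (('v \<times> nat) \<Rightarrow> real) set" where
  "rW I E s t d r = {\<psi>. \<exists>tc c. (\<forall>w\<in>Widx E s t d. 0 \<le> tc w \<and> tc w \<le> r) \<and>
        \<psi> = (\<lambda>b. (\<Sum>w\<in>Widx E s t d. tc w * wt s t w b) + c * tau I d b)}"

definition rfun :: "'v set \<Rightarrow> 'e set \<Rightarrow> ('e \<Rightarrow> 'v) \<Rightarrow> ('e \<Rightarrow> 'v) \<Rightarrow> ('v \<Rightarrow> nat)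
     \<Rightarrow> (('v \<times> nat) \<Rightarrow> real) \<Rightarrow> real" where
  "rfun I E s t d \<chi> = Inf {r. 0 \<le> r \<and> \<chi> \<in> rW I E s t d r}"

definition Npos :: "'v set \<Rightarrow> 'e set \<Rightarrow> ('e \<Rightarrow> 'v) \<Rightarrow> ('e \<Rightarrow> 'v) \<Rightarrow> ('v \<Rightarrow> nat)
     \<Rightarrow> (('v \<times> nat) \<Rightarrow> int) \<Rightarrow> ('v \<times> nat) \<Rightarrow> real" where
  "Npos I E s t d lam = (\<lambda>b. \<Sum>w\<in>{w\<in>Widx E s t d. pairing I d lam (wt s t w) > 0}. wt s t w b)"

definition Hr :: "'v set \<Rightarrow> 'e set \<Rightarrow> ('e \<Rightarrow> 'v) \<Rightarrow> ('e \<Rightarrow> 'v) \<Rightarrow> ('v \<Rightarrow> nat) \<Rightarrow> real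
     \<Rightarrow> (('v \<times> nat) \<Rightarrow> int) \<Rightarrow> (('v \<times> nat) \<Rightarrow> real) set" where
  "Hr I E s t d r lam = {\<psi>. pairing I d lam \<psi> + r * pairing I d lam (Npos I E s t d lam) = 0}"

definition Fr :: "'v set \<Rightarrow> 'e set \<Rightarrow> ('e \<Rightarrow> 'v) \<Rightarrow> ('e \<Rightarrow> 'v) \<Rightarrow> ('v \<Rightarrow> nat) \<Rightarrow> real
     \<Rightarrow> (('v \<times> nat) \<Rightarrow> int) \<Rightarrow> (('v \<times> nat) \<Rightarrow> real) set" where
  "Fr I E s t d r lam = Hr I E s t d r lam \<inter> rW I E s t d r"

definition cgeq :: "'v set \<Rightarrow> 'e set \<Rightarrow> ('e \<Rightarrow> 'v) \<Rightarrow> ('e \<Rightarrow> 'v) \<Rightarrow> ('v \<Rightarrow> nat)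
     \<Rightarrow> (('v \<times> nat) \<Rightarrow> int) \<Rightarrow> (('v \<times> nat) \<Rightarrow> int) \<Rightarrow> bool" where
  "cgeq I E s t d mu lam \<longleftrightarrow>
     (\<forall>w\<in>Widx E s t d. pairing I d lam (wt s t w) > 0 \<longrightarrow> pairing I d mu (wt s t w) > 0)"

definition cgt :: "'v set \<Rightarrow> 'e set \<Rightarrow> ('e \<Rightarrow> 'v) \<Rightarrow> ('e \<Rightarrow> 'v) \<Rightarrow> ('v \<Rightarrow> nat)
     \<Rightarrow> (('v \<times> nat) \<Rightarrow> int) \<Rightarrow> (('v \<times> nat) \<Rightarrow> int) \<Rightarrow> bool" where
  "cgt I E s t d mu lam \<longleftrightarrow> cgeq I E s t d mu lam \<and> \<not> cgeq I E s t d lam mu"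

definition Fint :: "'v set \<Rightarrow> 'e set \<Rightarrow> ('e \<Rightarrow> 'v) \<Rightarrow> ('e \<Rightarrow> 'v) \<Rightarrow> ('v \<Rightarrow> nat) \<Rightarrow> real
     \<Rightarrow> (('v \<times> nat) \<Rightarrow> int) \<Rightarrow> (('v \<times> nat) \<Rightarrow> real) set" where
  "Fint I E s t d r lam = Fr I E s t d r lam -
     (\<Union>mu\<in>{mu. cochar I d mu \<and> cgt I E s t d mu lam}. Fr I E s t d r mu)"

definition decomp :: "'v set \<Rightarrow> 'e set \<Rightarrow> ('e \<Rightarrow> 'v) \<Rightarrow> ('e \<Rightarrow> 'v) \<Rightarrow> ('v \<Rightarrow> nat) \<Rightarrow> real
     \<Rightarrow> real set \<Rightarrow> (('v \<times> nat) \<Rightarrow> int) \<Rightarrow> (('v \<times> nat) \<Rightarrow> real) \<Rightarrow> bool" where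
  "decomp I E s t d r Z lam \<chi> \<longleftrightarrow>
     (\<exists>c cb. (\<forall>w\<in>Widx E s t d.
                 (pairing I d lam (wt s t w) < 0 \<longrightarrow> cb w = 0) \<and>
                 (pairing I d lam (wt s t w) > 0 \<longrightarrow> cb w = - r) \<and>
                 (pairing I d lam (wt s t w) = 0 \<longrightarrow> cb w \<in> Z)) \<and>
             \<chi> = (\<lambda>b. (\<Sum>w\<in>Widx E s t d. cb w * wt s t w b) + c * tau I d b))"

end

theory Submission imports Defs begin

definition hdw :: "('e \<Rightarrow> 'v) \<Rightarrow> 'e \<times> nat \<times> nat \<Rightarrow> 'v \<times> nat" where
  "hdw t w = (t (fst w), snd (snd w))"
definition tlw :: "('e \<Rightarrow> 'v) \<Rightarrow> 'e \<times> nat \<times> nat \<Rightarrow> 'v \<times> nat" where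
  "tlw s w = (s (fst w), fst (snd w))"

lemma wt_eq: "wt s t w = (\<lambda>b. (if b = hdw t w then 1 else 0) - (if b = tlw s w then 1 else 0))"
  by (cases w) (auto simp: wt_def hdw_def tlw_def)

lemma Bidx_Sigma: "Bidx I d = Sigma I (\<lambda>i. {1..d i})"
  by (auto simp: Bidx_def)
lemma finite_Bidx: "finite I \<Longrightarrow> finite (Bidx I d)"
  by (simp add: Bidx_Sigma)
lemma Widx_Sigma: "Widx E s t d = Sigma E (\<lambda>a. {1..d (s a)} \<times> {1..d (t a)})"
  by (auto simp: Widx_def)
lemma finite_Widx: "finite E \<Longrightarrow> finite (Widx E s t d)"
  by (simp add: Widx_Sigma)

lemma hd_tl_in_B: "\<forall>a\<in>E. s a \<in> I \<and> t a \<in> I \<Longrightarrow> w \<in> Widx E s t d \<Longrightarrow> hdw t w \<in> Bidx I d \<and> tlw s w \<in> Bidx I d"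
  by (auto simp: Widx_def Bidx_def hdw_def tlw_def)

lemma pairing_delta:
  assumes "finite I" shows "(\<Sum>b\<in>Bidx I d. real_of_int (rho b) * (if b = h then 1 else 0)) = (if h \<in> Bidx I d then real_of_int (rho h) else 0)"
proof -
  have "(\<Sum>b\<in>Bidx I d. real_of_int (rho b) * (if b = h then 1 else 0)) = (\<Sum>b\<in>Bidx I d. if b = h then real_of_int (rho b) else 0)"
    by (rule sum.cong) auto
  also have "\<dots> = (if h \<in> Bidx I d then real_of_int (rho h) else 0)" using finite_Bidx[OF assms] by (simp add: sum.delta')
  finally show ?thesis .
qed

lemma pairing_wt:
  assumes "finite I" "\<forall>a\<in>E. s a \<in> I \<and> t a \<in> I" "w \<in> Widx E s t d"
  shows "pairing I d rho (wt s t w) = of_int (rho (hdw t w) - rho (tlw s w))"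
proof -
  have h: "hdw t w \<in> Bidx I d" "tlw s w \<in> Bidx I d" using hd_tl_in_B assms by blast+
  have "pairing I d rho (wt s t w) = (\<Sum>b\<in>Bidx I d. real_of_int (rho b) * (if b = hdw t w then 1 else 0)) - (\<Sum>b\<in>Bidx I d. real_of_int (rho b) * (if b = tlw s w then 1 else 0))"
    unfolding pairing_def wt_eq by (simp add: sum_subtractf[symmetric] right_diff_distrib)
  also have "\<dots> = of_int (rho (hdw t w) - rho (tlw s w))" using h by (simp add: pairing_delta[OF assms(1)])
  finally show ?thesis .
qed

lemma pairing_lin:
  assumes "finite I" "finite S"
  shows "pairing I d rho (\<lambda>b. (\<Sum>w\<in>S. f w * g w b) + c * tau I d b)
     = (\<Sum>w\<in>S. f w * pairing I d rho (g w)) + c * pairing I d rho (tau I d)"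
  unfolding pairing_def
  by (simp add: distrib_left sum.distrib sum_distrib_left sum_distrib_right mult_ac sum.swap[of _ "Bidx I d"])

lemma pairing_tau: "cochar I d rho \<Longrightarrow> pairing I d rho (tau I d) = 0"
  unfolding pairing_def tau_def cochar_def
  by (simp add: sum_divide_distrib[symmetric] of_int_sum[symmetric])

lemma pairing_Npos:
  assumes "finite I" "finite E"
  shows "pairing I d rho (Npos I E s t d lam) = (\<Sum>w\<in>Widx E s t d. if pairing I d lam (wt s t w) > 0 then pairing I d rho (wt s t w) else 0)"
proof -
  have fin: "finite {w\<in>Widx E s t d. pairing I d lam (wt s t w) > 0}" by (rule finite_subset[OF _ finite_Widx[OF assms(2)]]) auto
  have "pairing I d rho (Npos I E s t d lam) = (\<Sum>w\<in>{w\<in>Widx E s t d. pairing I d lam (wt s t w) > 0}. pairing I d rho (wt s t w))"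
    using pairing_lin[OF assms(1) fin, where d=d and rho=rho and f="\<lambda>_. 1" and g="wt s t" and c=0] by (simp add: Npos_def)
  then show ?thesis by (simp add: sum.inter_filter[OF finite_Widx[OF assms(2)]])
qed



lemma key_eq:
  assumes finI: "finite I" and finE: "finite E" and cl: "cochar I d lam"
    and cbr: "\<forall>w\<in>Widx E s t d. -r \<le> cb w \<and> cb w \<le> 0"
    and chi: "\<chi> = (\<lambda>b. (\<Sum>w\<in>Widx E s t d. cb w * wt s t w b) + c * tau I d b)"
    and H: "\<chi> \<in> Hr I E s t d r lam" and w: "w \<in> Widx E s t d"
  shows "(pairing I d lam (wt s t w) > 0 \<longrightarrow> cb w = -r) \<and> (pairing I d lam (wt s t w) < 0 \<longrightarrow> cb w = 0)"
proof -
  define p where "p w = pairing I d lam (wt s t w)" for w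
  have finW: "finite (Widx E s t d)" using finite_Widx[OF finE] .
  have A: "pairing I d lam \<chi> = (\<Sum>w\<in>Widx E s t d. cb w * p w)"
    unfolding chi p_def by (simp add: pairing_lin[OF finI finW] pairing_tau[OF cl])
  have B: "pairing I d lam (Npos I E s t d lam) = (\<Sum>w\<in>Widx E s t d. if p w > 0 then p w else 0)"
    unfolding p_def by (rule pairing_Npos[OF finI finE])
  define g where "g w = cb w * p w + (if p w > 0 then r * p w else 0)" for w
  have C: "r * (\<Sum>w\<in>Widx E s t d. if p w > 0 then p w else 0) = (\<Sum>w\<in>Widx E s t d. if p w > 0 then r * p w else 0)"
    unfolding sum_distrib_left by (rule sum.cong) auto
  have "(\<Sum>w\<in>Widx E s t d. g w) = pairing I d lam \<chi> + r * pairing I d lam (Npos I E s t d lam)"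
    unfolding A B C g_def by (simp only: sum.distrib)
  also have "\<dots> = 0" using H by (simp add: Hr_def)
  finally have S: "(\<Sum>w\<in>Widx E s t d. g w) = 0" .
  have nn: "\<forall>w\<in>Widx E s t d. 0 \<le> g w"
  proof
    fix w assume "w \<in> Widx E s t d"
    then have "-r \<le> cb w" "cb w \<le> 0" using cbr by auto
    show "0 \<le> g w"
    proof (cases "p w > 0")
      case True
      have "0 \<le> (cb w + r) * p w" using True \<open>-r \<le> cb w\<close> by simp
      then show ?thesis using True by (simp add: g_def algebra_simps)
    next
      case False
      have "0 \<le> cb w * p w" using False \<open>cb w \<le> 0\<close> by (simp add: mult_nonpos_nonpos)
      then show ?thesis using False by (simp add: g_def)
    qed
  qed
  have "g w = 0" using sum_nonneg_eq_0_iff[OF finW] nn S w by blast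
  then show ?thesis
  proof -
    assume g0: "g w = 0"
    have 1: "p w > 0 \<longrightarrow> cb w = -r"
    proof
      assume "p w > 0"
      then have "(cb w + r) * p w = 0" using g0 by (simp add: g_def algebra_simps)
      then show "cb w = -r" using \<open>p w > 0\<close> by simp
    qed
    have 2: "p w < 0 \<longrightarrow> cb w = 0"
    proof
      assume "p w < 0"
      then have "cb w * p w = 0" using g0 by (simp add: g_def)
      then show "cb w = 0" using \<open>p w < 0\<close> by simp
    qed
    show ?thesis using 1 2 by (simp add: p_def)
  qed
qed

lemma decomp_Hr:
  assumes finI: "finite I" and finE: "finite E" and cl: "cochar I d lam"
    and cb: "\<forall>w\<in>Widx E s t d. (pairing I d lam (wt s t w) < 0 \<longrightarrow> cb w = 0) \<and> (pairing I d lam (wt s t w) > 0 \<longrightarrow> cb w = -r)"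
    and chi: "\<chi> = (\<lambda>b. (\<Sum>w\<in>Widx E s t d. cb w * wt s t w b) + c * tau I d b)"
  shows "\<chi> \<in> Hr I E s t d r lam"
proof -
  define p where "p w = pairing I d lam (wt s t w)" for w
  have finW: "finite (Widx E s t d)" using finite_Widx[OF finE] .
  have A: "pairing I d lam \<chi> = (\<Sum>w\<in>Widx E s t d. cb w * p w)"
    unfolding chi p_def by (simp add: pairing_lin[OF finI finW] pairing_tau[OF cl])
  have B: "pairing I d lam (Npos I E s t d lam) = (\<Sum>w\<in>Widx E s t d. if p w > 0 then p w else 0)"
    unfolding p_def by (rule pairing_Npos[OF finI finE])
  have "(\<Sum>w\<in>Widx E s t d. cb w * p w) = (\<Sum>w\<in>Widx E s t d. - r * (if p w > 0 then p w else 0))"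
  proof (rule sum.cong)
    fix w assume "w \<in> Widx E s t d"
    then show "cb w * p w = - r * (if p w > 0 then p w else 0)" using cb
      by (cases "p w > 0"; cases "p w < 0") (auto simp: p_def)
  qed simp
  then have "pairing I d lam \<chi> = - r * pairing I d lam (Npos I E s t d lam)"
    unfolding A B by (simp add: sum_distrib_left)
  then show ?thesis by (simp add: Hr_def)
qed

lemma sigma_exists:
  assumes finE: "finite E" and sym: "symmetric_quiver I E s t" and st: "\<forall>a\<in>E. s a \<in> I \<and> t a \<in> I"
  shows "\<exists>\<sigma>. bij_betw \<sigma> (Widx E s t d) (Widx E s t d) \<and> (\<forall>w\<in>Widx E s t d. wt s t (\<sigma> w) = (\<lambda>b. - wt s t w b))"
proof -
  define A where "A i j = {a\<in>E. s a = i \<and> t a = j}" for i j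
  define F where "F i j = (SOME f. bij_betw f (A i j) (A j i))" for i j
  have FA: "bij_betw (F i j) (A i j) (A j i)" if "i \<in> I" "j \<in> I" for i j
  proof -
    have "card (A i j) = card (A j i)" using sym that unfolding symmetric_quiver_def A_def by blast
    moreover have "finite (A i j)" "finite (A j i)" using finE unfolding A_def by auto
    ultimately have "\<exists>f. bij_betw f (A i j) (A j i)" using finite_same_card_bij by blast
    then show ?thesis unfolding F_def by (rule someI_ex)
  qed
  define phi where "phi a = F (s a) (t a) a" for a
  have phiA: "phi a \<in> A (t a) (s a)" if "a \<in> E" for a
  proof -
    have "a \<in> A (s a) (t a)" using that by (simp add: A_def)
    then show ?thesis unfolding phi_def using FA[of "s a" "t a"] st that bij_betwE by blast
  qed
  then have phiE: "phi a \<in> E" "s (phi a) = t a" "t (phi a) = s a" if "a \<in> E" for a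
    using that by (auto simp: A_def)
  have phi_inj: "a = a'" if "a \<in> E" "a' \<in> E" "phi a = phi a'" for a a'
  proof -
    have e: "s a = s a'" "t a = t a'" using phiE that by metis+
    have "a \<in> A (s a) (t a)" "a' \<in> A (s a) (t a)" using that e by (auto simp: A_def)
    moreover have "F (s a) (t a) a = F (s a) (t a) a'" using that e by (simp add: phi_def)
    ultimately show ?thesis using FA[of "s a" "t a"] st that(1) unfolding bij_betw_def inj_on_def by blast
  qed
  have phi_surj: "\<exists>a\<in>E. phi a = b" if "b \<in> E" for b
  proof -
    have "b \<in> A (s b) (t b)" using that by (simp add: A_def)
    then have "b \<in> F (t b) (s b) ` A (t b) (s b)" using FA[of "t b" "s b"] st that unfolding bij_betw_def by blast
    then obtain a where a: "a \<in> A (t b) (s b)" "F (t b) (s b) a = b" by (metis imageE)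
    then have "a \<in> E" "s a = t b" "t a = s b" by (auto simp: A_def)
    then have "phi a = b" using a by (simp add: phi_def)
    then show ?thesis using \<open>a \<in> E\<close> by blast
  qed
  define \<sigma> where "\<sigma> w = (case w of (a, x, y) \<Rightarrow> (phi a, y, x))" for w :: "'a \<times> nat \<times> nat"
  have "bij_betw \<sigma> (Widx E s t d) (Widx E s t d)"
    unfolding bij_betw_def
  proof
    show "inj_on \<sigma> (Widx E s t d)"
      unfolding inj_on_def \<sigma>_def Widx_def using phi_inj by auto
    show "\<sigma> ` Widx E s t d = Widx E s t d"
    proof
      show "\<sigma> ` Widx E s t d \<subseteq> Widx E s t d"
        unfolding \<sigma>_def Widx_def using phiE by auto
      show "Widx E s t d \<subseteq> \<sigma> ` Widx E s t d"
      proof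
        fix w assume w: "w \<in> Widx E s t d"
        obtain b x y where bxy: "w = (b, x, y)" by (cases w) auto
        have "b \<in> E" using w bxy by (simp add: Widx_def)
        then obtain a where a: "a \<in> E" "phi a = b" using phi_surj by blast
        have "(a, y, x) \<in> Widx E s t d" using w bxy a phiE[of a] by (auto simp: Widx_def)
        moreover have "\<sigma> (a, y, x) = w" using bxy a by (simp add: \<sigma>_def)
        ultimately show "w \<in> \<sigma> ` Widx E s t d" by force
      qed
    qed
  qed
  moreover have "\<forall>w\<in>Widx E s t d. wt s t (\<sigma> w) = (\<lambda>b. - wt s t w b)"
    unfolding \<sigma>_def Widx_def wt_def using phiE by auto
  ultimately show ?thesis by blast
qed

lemma reflect:
  assumes "bij_betw \<sigma> W W" "\<forall>w\<in>W. wt s t (\<sigma> w) = (\<lambda>b. - wt s t w b)"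
  shows "(\<Sum>w\<in>W. g w * wt s t w b) = (\<Sum>w\<in>W. - g (\<sigma> w) * wt s t w b)"
proof -
  have "(\<Sum>w\<in>W. g w * wt s t w b) = (\<Sum>w\<in>W. g (\<sigma> w) * wt s t (\<sigma> w) b)"
    using sum.reindex_bij_betw[OF assms(1), of "\<lambda>w. g w * wt s t w b"] by simp
  also have "\<dots> = (\<Sum>w\<in>W. - g (\<sigma> w) * wt s t w b)"
    using assms(2) by (intro sum.cong) auto
  finally show ?thesis .
qed


lemma small_eps:
  fixes cb \<delta> :: "'w \<Rightarrow> real"
  assumes finW: "finite W"
    and h: "\<forall>u\<in>W. -r \<le> cb u \<and> cb u \<le> 0 \<and> (cb u = -r \<longrightarrow> \<delta> u \<ge> 0) \<and> (cb u = 0 \<longrightarrow> \<delta> u \<le> 0)"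
  shows "\<exists>\<epsilon>>0. \<forall>u\<in>W. -r \<le> cb u + \<epsilon> * \<delta> u \<and> cb u + \<epsilon> * \<delta> u \<le> 0 \<and> (cb u > -r \<longrightarrow> cb u + \<epsilon> * \<delta> u > -r)"
proof -
  have pos: "eventually (\<lambda>\<epsilon>::real. \<epsilon> > 0) (at_right 0)" by (rule eventually_at_right_less)
  have "\<forall>u\<in>W. eventually (\<lambda>\<epsilon>. -r \<le> cb u + \<epsilon> * \<delta> u \<and> cb u + \<epsilon> * \<delta> u \<le> 0 \<and> (cb u > -r \<longrightarrow> cb u + \<epsilon> * \<delta> u > -r)) (at_right 0)"
  proof
    fix u assume u: "u \<in> W"
    have lim0: "((\<lambda>\<epsilon>. cb u + \<epsilon> * \<delta> u) \<longlongrightarrow> cb u + 0 * \<delta> u) (at_right 0)"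
      by (intro tendsto_intros)
    then have lim: "((\<lambda>\<epsilon>. cb u + \<epsilon> * \<delta> u) \<longlongrightarrow> cb u) (at_right 0)" by simp
    have up: "eventually (\<lambda>\<epsilon>. cb u + \<epsilon> * \<delta> u \<le> 0) (at_right 0)"
    proof (cases "cb u < 0")
      case True
      show ?thesis using order_tendstoD(2)[OF lim True] by (rule eventually_mono) simp
    next
      case False
      then have "cb u = 0" "\<delta> u \<le> 0" using h u by auto
      then show ?thesis using pos by (rule_tac eventually_mono[OF pos]) (simp add: mult_pos_neg mult_nonneg_nonpos)
    qed
    have low: "eventually (\<lambda>\<epsilon>. -r \<le> cb u + \<epsilon> * \<delta> u \<and> (cb u > -r \<longrightarrow> cb u + \<epsilon> * \<delta> u > -r)) (at_right 0)"
    proof (cases "cb u > -r")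
      case True
      show ?thesis using order_tendstoD(1)[OF lim True] by (rule eventually_mono) (use True in simp)
    next
      case False
      then have "cb u = -r" "\<delta> u \<ge> 0" using h u by auto
      then show ?thesis by (rule_tac eventually_mono[OF pos]) simp
    qed
    show "eventually (\<lambda>\<epsilon>. -r \<le> cb u + \<epsilon> * \<delta> u \<and> cb u + \<epsilon> * \<delta> u \<le> 0 \<and> (cb u > -r \<longrightarrow> cb u + \<epsilon> * \<delta> u > -r)) (at_right 0)"
      using eventually_conj[OF up low] by (rule eventually_mono) auto
  qed
  then have "eventually (\<lambda>\<epsilon>. \<forall>u\<in>W. -r \<le> cb u + \<epsilon> * \<delta> u \<and> cb u + \<epsilon> * \<delta> u \<le> 0 \<and> (cb u > -r \<longrightarrow> cb u + \<epsilon> * \<delta> u > -r)) (at_right 0)"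
    by (rule eventually_ball_finite[OF finW])
  then have "eventually (\<lambda>\<epsilon>. \<epsilon> > 0 \<and> (\<forall>u\<in>W. -r \<le> cb u + \<epsilon> * \<delta> u \<and> cb u + \<epsilon> * \<delta> u \<le> 0 \<and> (cb u > -r \<longrightarrow> cb u + \<epsilon> * \<delta> u > -r))) (at_right 0)"
    by (rule eventually_conj[OF pos])
  from eventually_happens'[OF trivial_limit_at_right_real this] show ?thesis by blast
qed

lemma sum_delta_mult:
  assumes "finite W" "w \<in> W"
  shows "(\<Sum>u\<in>W. (if u = w then 1 else 0) * (f u :: real)) = f w"
proof -
  have "(\<Sum>u\<in>W. (if u = w then 1 else 0) * f u) = (\<Sum>u\<in>W. if u = w then f u else 0)"
    by (rule sum.cong) auto
  then show ?thesis using assms by (simp add: sum.delta')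
qed

definition validd where
  "validd I E s t d r lam \<chi> cb c \<longleftrightarrow>
     (\<forall>w\<in>Widx E s t d.
                 (pairing I d lam (wt s t w) < 0 \<longrightarrow> cb w = 0) \<and>
                 (pairing I d lam (wt s t w) > 0 \<longrightarrow> cb w = - r) \<and>
                 (pairing I d lam (wt s t w) = 0 \<longrightarrow> cb w \<in> {-r..0})) \<and>
             \<chi> = (\<lambda>b. (\<Sum>w\<in>Widx E s t d. cb w * wt s t w b) + c * tau I d b)"

lemma decomp_validd: "decomp I E s t d r {-r..0} lam \<chi> \<longleftrightarrow> (\<exists>c cb. validd I E s t d r lam \<chi> cb c)"
  unfolding decomp_def validd_def by blast

lemma validd_range:
  assumes "validd I E s t d r lam \<chi> cb c" "r \<ge> 0" "w \<in> Widx E s t d"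
  shows "-r \<le> cb w \<and> cb w \<le> 0"
  using assms unfolding validd_def
  by (cases "pairing I d lam (wt s t w) < 0"; cases "pairing I d lam (wt s t w) > 0") auto


lemma int_sign:
  fixes K N D e :: int
  assumes "K \<ge> 1" "N = 2*K+1" "-1 \<le> e" "e \<le> 1"
  shows "(D > 0 \<longrightarrow> N*D + K*e > 0) \<and> (D < 0 \<longrightarrow> N*D + K*e < 0) \<and> (D = 0 \<longrightarrow> N*D + K*e = K*e)"
proof -
  have a: "K*e \<ge> K*(-1)" using assms by (intro mult_left_mono) auto
  have b: "K*e \<le> K*1" using assms by (intro mult_left_mono) auto
  have c: "D > 0 \<Longrightarrow> N*D \<ge> N*1" using assms by (intro mult_left_mono) auto
  have d: "D < 0 \<Longrightarrow> N*D \<le> N*(-1)" using assms by (intro mult_left_mono) auto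
  have "D > 0 \<Longrightarrow> N*D + K*e > 0" using a c assms(1,2) by linarith
  moreover have "D < 0 \<Longrightarrow> N*D + K*e < 0" using b d assms(1,2) by linarith
  ultimately show ?thesis by auto
qed

lemma flow_step:
  assumes finI: "finite I" and finE: "finite E" and st: "\<forall>a\<in>E. s a \<in> I \<and> t a \<in> I"
    and r: "0 < r" and cl: "cochar I d lam"
    and Fi: "\<chi> \<in> Fint I E s t d r lam"
    and v: "validd I E s t d r lam \<chi> cb c"
    and w0: "w0 \<in> Widx E s t d" "pairing I d lam (wt s t w0) = 0" "cb w0 = -r"
  shows "\<exists>cb'. validd I E s t d r lam \<chi> cb' c \<and>
    {w\<in>Widx E s t d. pairing I d lam (wt s t w) = 0 \<and> cb' w = -r} \<subseteq> {w\<in>Widx E s t d. pairing I d lam (wt s t w) = 0 \<and> cb w = -r} - {w0}"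
proof -
  define W where "W = Widx E s t d"
  define p where "p w = pairing I d lam (wt s t w)" for w
  define Rel where "Rel = {(hdw t w, tlw s w) | w. w \<in> W \<and> p w = 0 \<and> cb w > -r} \<union> {(tlw s w, hdw t w) | w. w \<in> W \<and> p w = 0 \<and> cb w < 0}"
  define h0 where "h0 = hdw t w0"
  define t0 where "t0 = tlw s w0"
  define ind where "ind v = (\<lambda>b. if b = v then (1::real) else 0)" for v :: "'a \<times> nat"
  define adm where "adm \<delta> \<longleftrightarrow> (\<forall>w\<in>W. (p w \<noteq> 0 \<longrightarrow> \<delta> w = 0) \<and> (cb w = -r \<longrightarrow> \<delta> w \<ge> 0) \<and> (cb w = 0 \<longrightarrow> \<delta> w \<le> 0))" for \<delta> :: "'b \<times> nat \<times> nat \<Rightarrow> real"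
  have finW: "finite W" using finite_Widx[OF finE] by (simp add: W_def)
  have wtI: "wt s t w b = ind (hdw t w) b - ind (tlw s w) b" for w b by (simp add: wt_eq ind_def)
  have rng: "-r \<le> cb w \<and> cb w \<le> 0" if "w \<in> W" for w
    using validd_range[OF v _ that[unfolded W_def]] r by simp
  have vv: "\<forall>w\<in>W. (p w < 0 \<longrightarrow> cb w = 0) \<and> (p w > 0 \<longrightarrow> cb w = - r) \<and> (p w = 0 \<longrightarrow> cb w \<in> {-r..0})"
    and chi: "\<chi> = (\<lambda>b. (\<Sum>w\<in>W. cb w * wt s t w b) + c * tau I d b)"
    using v unfolding validd_def W_def p_def by auto
  have reach: "\<exists>\<delta>. adm \<delta> \<and> (\<forall>b. (\<Sum>w\<in>W. \<delta> w * wt s t w b) = ind v b - ind h0 b)" if "(h0, v) \<in> Rel\<^sup>*" for v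
    using that
  proof (induction rule: rtrancl_induct)
    case base
    have "adm (\<lambda>_. 0)" by (simp add: adm_def)
    then show ?case by (intro exI[of _ "\<lambda>_. 0"]) simp
  next
    case (step y z)
    from step.IH obtain \<delta> where ad: "adm \<delta>" and sm: "\<forall>b. (\<Sum>w\<in>W. \<delta> w * wt s t w b) = ind y b - ind h0 b" by blast
    from step.hyps(2) consider (fw) w where "w \<in> W" "p w = 0" "cb w > -r" "y = hdw t w" "z = tlw s w"
      | (bw) w where "w \<in> W" "p w = 0" "cb w < 0" "y = tlw s w" "z = hdw t w"
      unfolding Rel_def by blast
    then show ?case
    proof cases
      case fw
      define \<delta>' where "\<delta>' u = \<delta> u - (if u = w then 1 else 0)" for u
      have "adm \<delta>'" using ad fw unfolding adm_def \<delta>'_def by auto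
      moreover have "(\<Sum>u\<in>W. \<delta>' u * wt s t u b) = ind z b - ind h0 b" for b
      proof -
        have "(\<Sum>u\<in>W. \<delta>' u * wt s t u b) = (\<Sum>u\<in>W. \<delta> u * wt s t u b) - (\<Sum>u\<in>W. (if u = w then 1 else 0) * wt s t u b)"
          unfolding \<delta>'_def by (simp add: left_diff_distrib sum_subtractf)
        also have "\<dots> = ind z b - ind h0 b" using sm[THEN spec, of b] sum_delta_mult[OF finW fw(1), of "\<lambda>u. wt s t u b"] fw wtI[of w b] by simp
        finally show ?thesis .
      qed
      ultimately show ?thesis by blast
    next
      case bw
      define \<delta>' where "\<delta>' u = \<delta> u + (if u = w then 1 else 0)" for u
      have "adm \<delta>'" using ad bw unfolding adm_def \<delta>'_def by auto
      moreover have "(\<Sum>u\<in>W. \<delta>' u * wt s t u b) = ind z b - ind h0 b" for b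
      proof -
        have "(\<Sum>u\<in>W. \<delta>' u * wt s t u b) = (\<Sum>u\<in>W. \<delta> u * wt s t u b) + (\<Sum>u\<in>W. (if u = w then 1 else 0) * wt s t u b)"
          unfolding \<delta>'_def by (simp add: distrib_right sum.distrib)
        also have "\<dots> = ind z b - ind h0 b" using sm[THEN spec, of b] sum_delta_mult[OF finW bw(1), of "\<lambda>u. wt s t u b"] bw wtI[of w b] by simp
        finally show ?thesis .
      qed
      ultimately show ?thesis by blast
    qed
  qed
  have w0W: "w0 \<in> W" "p w0 = 0" using w0 by (auto simp: W_def p_def)
  show ?thesis
  proof (cases "(h0, t0) \<in> Rel\<^sup>*")
    case True
    from reach[OF True] obtain \<delta> where ad: "adm \<delta>" and sm: "\<forall>b. (\<Sum>w\<in>W. \<delta> w * wt s t w b) = ind t0 b - ind h0 b" by blast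
    define \<delta>' where "\<delta>' u = \<delta> u + (if u = w0 then 1 else 0)" for u
    have sm0: "(\<Sum>u\<in>W. \<delta>' u * wt s t u b) = 0" for b
    proof -
      have "(\<Sum>u\<in>W. \<delta>' u * wt s t u b) = (\<Sum>u\<in>W. \<delta> u * wt s t u b) + (\<Sum>u\<in>W. (if u = w0 then 1 else 0) * wt s t u b)"
        unfolding \<delta>'_def by (simp add: distrib_right sum.distrib)
      also have "\<dots> = 0" using sm[THEN spec, of b] sum_delta_mult[OF finW w0W(1), of "\<lambda>u. wt s t u b"] wtI[of w0 b] by (simp add: h0_def t0_def)
      finally show ?thesis .
    qed
    have d0: "\<delta> w0 \<ge> 0" using ad w0W w0(3) by (auto simp: adm_def)
    have ad': "adm \<delta>'" using ad w0W w0(3) r d0 unfolding adm_def \<delta>'_def by auto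
    have d0': "\<delta>' w0 > 0" using d0 by (simp add: \<delta>'_def)
    have hh: "\<forall>u\<in>W. -r \<le> cb u \<and> cb u \<le> 0 \<and> (cb u = -r \<longrightarrow> \<delta>' u \<ge> 0) \<and> (cb u = 0 \<longrightarrow> \<delta>' u \<le> 0)"
      using rng ad' by (auto simp: adm_def)
    obtain \<epsilon> where e0: "\<epsilon> > 0" and eb: "\<forall>u\<in>W. -r \<le> cb u + \<epsilon> * \<delta>' u \<and> cb u + \<epsilon> * \<delta>' u \<le> 0 \<and> (cb u > -r \<longrightarrow> cb u + \<epsilon> * \<delta>' u > -r)"
      using small_eps[OF finW hh] by blast
    define cb' where "cb' u = cb u + \<epsilon> * \<delta>' u" for u
    have sumeq: "(\<Sum>u\<in>W. cb' u * wt s t u b) = (\<Sum>u\<in>W. cb u * wt s t u b)" for b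
    proof -
      have "(\<Sum>u\<in>W. cb' u * wt s t u b) = (\<Sum>u\<in>W. cb u * wt s t u b) + \<epsilon> * (\<Sum>u\<in>W. \<delta>' u * wt s t u b)"
        by (simp add: cb'_def distrib_right sum.distrib sum_distrib_left mult.assoc)
      then show ?thesis using sm0 by simp
    qed
    have "validd I E s t d r lam \<chi> cb' c"
      unfolding validd_def
    proof (rule conjI, rule ballI)
      fix w assume w: "w \<in> Widx E s t d"
      then have wW: "w \<in> W" by (simp add: W_def)
      have "p w \<noteq> 0 \<Longrightarrow> cb' w = cb w" using ad' wW by (simp add: adm_def cb'_def)
      then show "(pairing I d lam (wt s t w) < 0 \<longrightarrow> cb' w = 0) \<and>
                 (pairing I d lam (wt s t w) > 0 \<longrightarrow> cb' w = - r) \<and>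
                 (pairing I d lam (wt s t w) = 0 \<longrightarrow> cb' w \<in> {-r..0})"
        using vv wW eb by (auto simp: p_def cb'_def)
    next
      show "\<chi> = (\<lambda>b. (\<Sum>w\<in>Widx E s t d. cb' w * wt s t w b) + c * tau I d b)"
        using chi sumeq by (simp add: W_def)
    qed
    moreover have "{w\<in>Widx E s t d. pairing I d lam (wt s t w) = 0 \<and> cb' w = -r} \<subseteq> {w\<in>Widx E s t d. pairing I d lam (wt s t w) = 0 \<and> cb w = -r} - {w0}"
    proof
      fix w assume "w \<in> {w\<in>Widx E s t d. pairing I d lam (wt s t w) = 0 \<and> cb' w = -r}"
      then have w: "w \<in> W" "p w = 0" "cb' w = -r" by (auto simp: W_def p_def)
      have "cb w = -r"
      proof (rule ccontr)
        assume "cb w \<noteq> -r"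
        then have "cb w > -r" using rng[OF w(1)] by simp
        then show False using eb w by (auto simp: cb'_def)
      qed
      moreover have "w \<noteq> w0" using w(3) w0(3) d0' e0 by (auto simp: cb'_def)
      ultimately show "w \<in> {w\<in>Widx E s t d. pairing I d lam (wt s t w) = 0 \<and> cb w = -r} - {w0}"
        using w by (auto simp: W_def p_def)
    qed
    ultimately show ?thesis by blast
  next
    case False
    define U where "U = {v. (h0, v) \<in> Rel\<^sup>*}"
    have h0U: "h0 \<in> U" by (simp add: U_def)
    have t0U: "t0 \<notin> U" using False by (simp add: U_def)
    have cut1: "cb w = -r" if "w \<in> W" "p w = 0" "hdw t w \<in> U" "tlw s w \<notin> U" for w
    proof (rule ccontr)
      assume "cb w \<noteq> -r"
      then have "cb w > -r" using rng[OF that(1)] by simp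
      then have "(hdw t w, tlw s w) \<in> Rel" using that unfolding Rel_def by blast
      then have "tlw s w \<in> U" using that(3) rtrancl_into_rtrancl[of h0 "hdw t w" Rel "tlw s w"] by (simp add: U_def)
      then show False using that by simp
    qed
    have cut2: "cb w = 0" if "w \<in> W" "p w = 0" "tlw s w \<in> U" "hdw t w \<notin> U" for w
    proof (rule ccontr)
      assume "cb w \<noteq> 0"
      then have "cb w < 0" using rng[OF that(1)] by simp
      then have "(tlw s w, hdw t w) \<in> Rel" using that unfolding Rel_def by blast
      then have "hdw t w \<in> U" using that(3) rtrancl_into_rtrancl[of h0 "tlw s w" Rel "hdw t w"] by (simp add: U_def)
      then show False using that by simp
    qed
    define B where "B = Bidx I d"
    have finB: "finite B" using finite_Bidx[OF finI] by (simp add: B_def)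
    define K where "K = int (card B)"
    define N where "N = 2*K+1"
    define m where "m = int (card (B \<inter> U))"
    define mu where "mu b = (if b \<in> B then N * lam b + K * (if b \<in> U then 1 else 0) - m else 0)" for b
    have h0B: "h0 \<in> B" using hd_tl_in_B[OF st w0(1)] by (simp add: h0_def B_def)
    have K1: "K \<ge> 1" using finB h0B card_gt_0_iff[of B] by (auto simp: K_def)
    have cmu: "cochar I d mu"
    proof -
      have s1: "(\<Sum>b\<in>B. (if b \<in> U then 1 else 0::int)) = m"
        using sum.inter_restrict[OF finB, of "\<lambda>_. 1::int" U] by (simp add: m_def)
      have s2: "(\<Sum>b\<in>B. lam b) = 0" using cl by (simp add: cochar_def B_def)
      have "(\<Sum>b\<in>B. mu b) = (\<Sum>b\<in>B. N * lam b + K * (if b \<in> U then 1 else 0) - m)"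
        by (rule sum.cong) (auto simp: mu_def)
      also have "\<dots> = (\<Sum>b\<in>B. N * lam b) + (\<Sum>b\<in>B. K * (if b \<in> U then 1 else 0)) - (\<Sum>b\<in>B. m)"
        by (simp only: sum_subtractf sum.distrib)
      also have "\<dots> = N * (\<Sum>b\<in>B. lam b) + K * (\<Sum>b\<in>B. (if b \<in> U then 1 else 0::int)) - of_nat (card B) * m"
        by (simp only: sum_distrib_left[symmetric] sum_constant)
      also have "\<dots> = 0" unfolding s1 s2 K_def by simp
      finally have calc: "(\<Sum>b\<in>B. mu b) = 0" .
      have "\<forall>b. b \<notin> B \<longrightarrow> mu b = 0" by (simp add: mu_def)
      then show ?thesis using calc unfolding cochar_def B_def by blast
    qed
    define pm where "pm w = pairing I d mu (wt s t w)" for w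
    have signs: "(p w > 0 \<longrightarrow> pm w > 0) \<and> (p w < 0 \<longrightarrow> pm w < 0) \<and>
        (p w = 0 \<longrightarrow> (pm w > 0 \<longleftrightarrow> hdw t w \<in> U \<and> tlw s w \<notin> U) \<and> (pm w < 0 \<longleftrightarrow> tlw s w \<in> U \<and> hdw t w \<notin> U))"
      if wW: "w \<in> W" for w
    proof -
      have inB: "hdw t w \<in> B" "tlw s w \<in> B" using hd_tl_in_B[OF st, of w d] wW by (auto simp: W_def B_def)
      define D where "D = lam (hdw t w) - lam (tlw s w)"
      define e where "e = (if hdw t w \<in> U then 1 else 0) - (if tlw s w \<in> U then 1 else (0::int))"
      have pw: "p w = of_int D" using pairing_wt[OF finI st, of w d lam] wW by (simp add: p_def W_def D_def)
      have "pm w = of_int (mu (hdw t w) - mu (tlw s w))" using pairing_wt[OF finI st, of w d mu] wW by (simp add: pm_def W_def)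
      also have "mu (hdw t w) - mu (tlw s w) = N*D + K*e"
        using inB by (simp add: mu_def D_def e_def algebra_simps)
      finally have pmw: "pm w = of_int (N*D + K*e)" .
      define X where "X = N*D + K*e"
      have e1: "-1 \<le> e" "e \<le> 1" by (auto simp: e_def)
      have isg: "(D > 0 \<longrightarrow> X > 0) \<and> (D < 0 \<longrightarrow> X < 0) \<and> (D = 0 \<longrightarrow> X = K*e)"
        unfolding X_def by (rule int_sign[OF K1 N_def e1])
      have pp: "p w > 0 \<longleftrightarrow> D > 0" "p w < 0 \<longleftrightarrow> D < 0" "p w = 0 \<longleftrightarrow> D = 0" using pw by simp_all
      have qq: "pm w > 0 \<longleftrightarrow> X > 0" "pm w < 0 \<longleftrightarrow> X < 0" using pmw unfolding X_def[symmetric] by simp_all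
      have k1: "K*e > 0 \<longleftrightarrow> hdw t w \<in> U \<and> tlw s w \<notin> U" using K1 by (auto simp: e_def)
      have k2: "K*e < 0 \<longleftrightarrow> tlw s w \<in> U \<and> hdw t w \<notin> U" using K1 by (auto simp: e_def)
      show ?thesis unfolding pp qq using isg k1 k2 by auto
    qed
    have "validd I E s t d r mu \<chi> cb c"
      unfolding validd_def
    proof (rule conjI, rule ballI)
      fix w assume w: "w \<in> Widx E s t d"
      then have wW: "w \<in> W" by (simp add: W_def)
      show "(pairing I d mu (wt s t w) < 0 \<longrightarrow> cb w = 0) \<and>
                 (pairing I d mu (wt s t w) > 0 \<longrightarrow> cb w = - r) \<and>
                 (pairing I d mu (wt s t w) = 0 \<longrightarrow> cb w \<in> {-r..0})"
      proof (cases "p w > 0 \<or> p w < 0")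
        case True
        then show ?thesis using signs[OF wW] vv wW unfolding pm_def by auto
      next
        case False
        then have "p w = 0" by simp
        then show ?thesis using signs[OF wW] vv wW cut1[OF wW] cut2[OF wW] unfolding pm_def by auto
      qed
    next
      show "\<chi> = (\<lambda>b. (\<Sum>w\<in>Widx E s t d. cb w * wt s t w b) + c * tau I d b)"
        using chi by (simp add: W_def)
    qed
    then have "\<chi> \<in> Hr I E s t d r mu"
      using decomp_Hr[OF finI finE cmu, where cb=cb and r=r and \<chi>=\<chi> and c=c] unfolding validd_def by blast
    moreover have "\<chi> \<in> rW I E s t d r" using Fi by (simp add: Fint_def Fr_def)
    ultimately have inF: "\<chi> \<in> Fr I E s t d r mu" by (simp add: Fr_def)
    have "cgeq I E s t d mu lam" unfolding cgeq_def using signs by (auto simp: W_def p_def pm_def)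
    moreover have "\<not> cgeq I E s t d lam mu"
    proof -
      have "pm w0 > 0" using signs[OF w0W(1)] w0W h0U t0U by (simp add: h0_def t0_def)
      then show ?thesis unfolding cgeq_def using w0 by (auto simp: pm_def)
    qed
    ultimately have "cgt I E s t d mu lam" by (simp add: cgt_def)
    then have "\<chi> \<notin> Fint I E s t d r lam" using inF cmu by (auto simp: Fint_def)
    then show ?thesis using Fi by blast
  qed
qed


lemma flow_all:
  assumes finI: "finite I" and finE: "finite E" and st: "\<forall>a\<in>E. s a \<in> I \<and> t a \<in> I"
    and r: "0 < r" and cl: "cochar I d lam"
    and Fi: "\<chi> \<in> Fint I E s t d r lam"
  shows "validd I E s t d r lam \<chi> cb c \<Longrightarrow> \<exists>cb'. validd I E s t d r lam \<chi> cb' c \<and>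
    {w\<in>Widx E s t d. pairing I d lam (wt s t w) = 0 \<and> cb' w = -r} = {}"
proof (induction "card {w\<in>Widx E s t d. pairing I d lam (wt s t w) = 0 \<and> cb w = -r}" arbitrary: cb rule: less_induct)
  case less
  show ?case
  proof (cases "{w\<in>Widx E s t d. pairing I d lam (wt s t w) = 0 \<and> cb w = -r} = {}")
    case True
    then show ?thesis using less.prems by blast
  next
    case False
    then obtain w0 where w0: "w0 \<in> Widx E s t d" "pairing I d lam (wt s t w0) = 0" "cb w0 = -r" by blast
    obtain cb' where v': "validd I E s t d r lam \<chi> cb' c" and sub:
      "{w\<in>Widx E s t d. pairing I d lam (wt s t w) = 0 \<and> cb' w = -r} \<subseteq> {w\<in>Widx E s t d. pairing I d lam (wt s t w) = 0 \<and> cb w = -r} - {w0}"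
      using flow_step[OF finI finE st r cl Fi less.prems w0] by blast
    have fin: "finite {w\<in>Widx E s t d. pairing I d lam (wt s t w) = 0 \<and> cb w = -r}"
      by (rule finite_subset[OF _ finite_Widx[OF finE]]) auto
    have "{w\<in>Widx E s t d. pairing I d lam (wt s t w) = 0 \<and> cb' w = -r} \<subset> {w\<in>Widx E s t d. pairing I d lam (wt s t w) = 0 \<and> cb w = -r}"
      using sub w0 by blast
    then have "card {w\<in>Widx E s t d. pairing I d lam (wt s t w) = 0 \<and> cb' w = -r} < card {w\<in>Widx E s t d. pairing I d lam (wt s t w) = 0 \<and> cb w = -r}"
      by (rule psubset_card_mono[OF fin])
    then show ?thesis using less.hyps v' by blast
  qed
qed

lemma part1:
  assumes finI: "finite I" and finE: "finite E" and st: "\<forall>a\<in>E. s a \<in> I \<and> t a \<in> I"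
    and sym: "symmetric_quiver I E s t" and cl: "cochar I d lam"
    and F: "\<chi> \<in> Fr I E s t d r lam"
  shows "\<exists>c cb. validd I E s t d r lam \<chi> cb c"
proof -
  obtain \<sigma> where bij: "bij_betw \<sigma> (Widx E s t d) (Widx E s t d)" and sw: "\<forall>w\<in>Widx E s t d. wt s t (\<sigma> w) = (\<lambda>b. - wt s t w b)"
    using sigma_exists[OF finE sym st] by blast
  from F obtain tc c where tc: "\<forall>w\<in>Widx E s t d. 0 \<le> tc w \<and> tc w \<le> r"
    and chi0: "\<chi> = (\<lambda>b. (\<Sum>w\<in>Widx E s t d. tc w * wt s t w b) + c * tau I d b)"
    by (auto simp: Fr_def rW_def)
  define cb where "cb w = - tc (\<sigma> w)" for w
  have chi: "\<chi> = (\<lambda>b. (\<Sum>w\<in>Widx E s t d. cb w * wt s t w b) + c * tau I d b)"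
    unfolding chi0 cb_def using reflect[OF bij sw, of tc] by simp
  have cbr: "\<forall>w\<in>Widx E s t d. -r \<le> cb w \<and> cb w \<le> 0"
    using tc bij_betwE[OF bij] by (auto simp: cb_def)
  have H: "\<chi> \<in> Hr I E s t d r lam" using F by (simp add: Fr_def)
  have "validd I E s t d r lam \<chi> cb c"
    unfolding validd_def
  proof (rule conjI, rule ballI)
    fix w assume w: "w \<in> Widx E s t d"
    show "(pairing I d lam (wt s t w) < 0 \<longrightarrow> cb w = 0) \<and>
                 (pairing I d lam (wt s t w) > 0 \<longrightarrow> cb w = - r) \<and>
                 (pairing I d lam (wt s t w) = 0 \<longrightarrow> cb w \<in> {-r..0})"
      using key_eq[OF finI finE cl cbr chi H w] cbr w by auto
  qed (rule chi)
  then show ?thesis by blast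
qed

theorem proposition3p2:
  fixes I :: "'v set" and E :: "'e set" and s t :: "'e \<Rightarrow> 'v" and d :: "'v \<Rightarrow> nat"
  assumes "finite I" and "finite E" and "\<forall>a\<in>E. s a \<in> I \<and> t a \<in> I"
    and "symmetric_quiver I E s t"
    and "standing_assumption I E s t d"
  shows
    "(\<forall>r \<chi> lam. \<chi> \<in> MR I d \<and> rfun I E s t d \<chi> = r \<and> cochar I d lam \<and> \<chi> \<in> Fr I E s t d r lam
        \<longrightarrow> decomp I E s t d r {-r..0} lam \<chi>)
   \<and> (\<forall>r \<chi> lam. 0 \<le> r \<and> cochar I d lam \<and> \<chi> \<in> rW I E s t d r \<and> decomp I E s t d r {-r..0} lam \<chi>
        \<longrightarrow> \<chi> \<in> Fr I E s t d r lam)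
   \<and> (\<forall>r lam mu. 0 < r \<and> cochar I d lam \<and> cochar I d mu \<and> Fr I E s t d r mu \<subseteq> Fr I E s t d r lam
        \<longrightarrow> cgeq I E s t d mu lam)
   \<and> (\<forall>r \<chi> lam. 0 < r \<and> \<chi> \<in> MR I d \<and> rfun I E s t d \<chi> = r \<and> cochar I d lam \<and> \<chi> \<in> Fint I E s t d r lam
        \<longrightarrow> decomp I E s t d r {-r<..0} lam \<chi>)"
proof (intro conjI allI impI)
  note finI = assms(1) and finE = assms(2) and st = assms(3) and sym = assms(4)
  fix r \<chi> lam
  assume a: "\<chi> \<in> MR I d \<and> rfun I E s t d \<chi> = r \<and> cochar I d lam \<and> \<chi> \<in> Fr I E s t d r lam"
  then show "decomp I E s t d r {-r..0} lam \<chi>"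
    using part1[OF finI finE st sym, of d lam \<chi> r] decomp_validd by blast
next
  note finI = assms(1) and finE = assms(2) and st = assms(3) and sym = assms(4)
  fix r \<chi> lam
  assume a: "0 \<le> r \<and> cochar I d lam \<and> \<chi> \<in> rW I E s t d r \<and> decomp I E s t d r {-r..0} lam \<chi>"
  then obtain c cb where v: "validd I E s t d r lam \<chi> cb c" using decomp_validd by blast
  have "\<chi> \<in> Hr I E s t d r lam"
    using decomp_Hr[OF finI finE _, where lam=lam and cb=cb and r=r and \<chi>=\<chi> and c=c] a v unfolding validd_def by blast
  then show "\<chi> \<in> Fr I E s t d r lam" using a by (simp add: Fr_def)
next
  note finI = assms(1) and finE = assms(2) and st = assms(3) and sym = assms(4)
  fix r lam mu
  assume a: "0 < r \<and> cochar I d lam \<and> cochar I d mu \<and> Fr I E s t d r mu \<subseteq> Fr I E s t d r lam"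
  obtain \<sigma> where bij: "bij_betw \<sigma> (Widx E s t d) (Widx E s t d)" and sw: "\<forall>w\<in>Widx E s t d. wt s t (\<sigma> w) = (\<lambda>b. - wt s t w b)"
    using sigma_exists[OF finE sym st] by blast
  show "cgeq I E s t d mu lam"
    unfolding cgeq_def
  proof (rule ballI, rule impI, rule ccontr)
    fix w0 assume w0: "w0 \<in> Widx E s t d" and pl: "pairing I d lam (wt s t w0) > 0"
      and pm: "\<not> pairing I d mu (wt s t w0) > 0"
    define cb where "cb w = (if pairing I d mu (wt s t w) > 0 then -r else if pairing I d mu (wt s t w) < 0 then 0 else -r/2)" for w
    define \<chi> where "\<chi> = (\<lambda>b. (\<Sum>w\<in>Widx E s t d. cb w * wt s t w b) + 0 * tau I d b)"
    have cbr: "\<forall>w\<in>Widx E s t d. -r \<le> cb w \<and> cb w \<le> 0" using a by (auto simp: cb_def)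
    have "\<chi> \<in> rW I E s t d r"
    proof -
      define tc where "tc w = - cb (\<sigma> w)" for w
      have "\<forall>w\<in>Widx E s t d. 0 \<le> tc w \<and> tc w \<le> r"
      proof
        fix w assume "w \<in> Widx E s t d"
        then have "\<sigma> w \<in> Widx E s t d" using bij_betwE[OF bij] by blast
        from cbr[rule_format, OF this] show "0 \<le> tc w \<and> tc w \<le> r" by (simp add: tc_def)
      qed
      moreover have "\<chi> = (\<lambda>b. (\<Sum>w\<in>Widx E s t d. tc w * wt s t w b) + 0 * tau I d b)"
        unfolding \<chi>_def tc_def using reflect[OF bij sw, of cb] by simp
      ultimately show ?thesis unfolding rW_def by blast
    qed
    moreover have "\<chi> \<in> Hr I E s t d r mu"
      by (rule decomp_Hr[OF finI finE _ _ \<chi>_def]) (use a in \<open>auto simp: cb_def\<close>)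
    ultimately have "\<chi> \<in> Fr I E s t d r mu" by (simp add: Fr_def)
    then have "\<chi> \<in> Hr I E s t d r lam" using a by (auto simp: Fr_def)
    then have "cb w0 = -r" using key_eq[OF finI finE _ cbr \<chi>_def _ w0] a pl by blast
    then show False using pm a by (auto simp: cb_def split: if_splits)
  qed
next
  note finI = assms(1) and finE = assms(2) and st = assms(3) and sym = assms(4)
  fix r \<chi> lam
  assume a: "0 < r \<and> \<chi> \<in> MR I d \<and> rfun I E s t d \<chi> = r \<and> cochar I d lam \<and> \<chi> \<in> Fint I E s t d r lam"
  then have "\<chi> \<in> Fr I E s t d r lam" by (simp add: Fint_def)
  then obtain c cb where v: "validd I E s t d r lam \<chi> cb c" using part1[OF finI finE st sym, of d lam \<chi> r] a by blast
  obtain cb' where v': "validd I E s t d r lam \<chi> cb' c"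
    and e: "{w\<in>Widx E s t d. pairing I d lam (wt s t w) = 0 \<and> cb' w = -r} = {}"
    using flow_all[OF finI finE st _ _ _ v] a by blast
  have "(\<forall>w\<in>Widx E s t d.
                 (pairing I d lam (wt s t w) < 0 \<longrightarrow> cb' w = 0) \<and>
                 (pairing I d lam (wt s t w) > 0 \<longrightarrow> cb' w = - r) \<and>
                 (pairing I d lam (wt s t w) = 0 \<longrightarrow> cb' w \<in> {-r<..0})) \<and>
             \<chi> = (\<lambda>b. (\<Sum>w\<in>Widx E s t d. cb' w * wt s t w b) + c * tau I d b)"
    using v' e unfolding validd_def by fastforce
  then show "decomp I E s t d r {-r<..0} lam \<chi>" unfolding decomp_def by blast
qed

end
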